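(* Suppose (A1) holds: there exists $B>0$ such that for all $x$, $\|k(x,\cdot)\|_{\mathcal H_0}\le B$ and $\big(\sum_{i=1}^d\|\partial_{x_i}k(x,\cdot)\|_{\mathcal H_0}^2\big)^{1/2}\le B$. Assume moreover that $\nabla\log\pi$ is $M$-Lipschitz and that $\int\|x\|\,\mu_n(x)\,dx$ is bounded uniformly in $n$, where $(\mu_n)$ are the SVGD iterates. Then there exists $C>0$ such that $I_{Stein}(\mu_n|\pi)\le C$ for all $n$.
   Context: Target $\pi\propto e^{-V}$ on $\mathbb R^d$, $V\in C^2$; measures with densities identified with densities. $k$ positive semi-definite kernel with RKHS $\mathcal H_0$, $\mathcal H=\mathcal H_0^d$ with $\langle f,g\rangle_{\mathcal H}=\sum_i\langle f_i,g_i\rangle_{\mathcal H_0}$, $\int k(x,x)d\mu(x)<\infty$ for all $\mu\in\mathcal P_2$. $S_\mu f=\int k(x,\cdot)f(x)d\mu(x)\in\mathcal H$, $P_\mu f(y)=\int k(x,y)f(x)d\mu(x)$. $I_{Stein}(\mu|\pi)=\|S_\mu\nabla\log(\mu/\pi)\|_{\mathcal H}^2$. SVGD iterates with step $\gamma>0$: $\mu_0\in\mathcal P_2$ with density, $\mu_{n+1}=(I-\gamma P_{\mu_n}\nabla\log(\mu_n/\pi))_\#\mu_n$. *)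

theory Defs
  imports "HOL-Analysis.Analysis"
begin

text \<open>The ambient space R^d is an abstract Euclidean space 'a (d = DIM('a)).
  Probability measures with densities are identified with their density
  functions p w.r.t. Lebesgue measure.
  The kernel k is given through a feature map Phi into a separable real
  Hilbert space 'h, k x y = Phi x . Phi y.  In this representation
  the element k(x,.) of H_0 corresponds to Phi x, the partial derivative
  of k(x,.) in direction e_i corresponds to the partial derivative of Phi,
  and the embedding S_mu f corresponds to the vector-valued integral of
  f_i(x) Phi x, componentwise.\<close>

text \<open>Score nabla log(mu/pi) = nabla p / p + nabla V, where pi is proportional to exp(-V),
  p' is the gradient of the density p and gV is the gradient of V.\<close>
definition score :: "('a::euclidean_space \<Rightarrow> real) \<Rightarrow> ('a \<Rightarrow> 'a) \<Rightarrow> ('a \<Rightarrow> 'a) \<Rightarrow> 'a \<Rightarrow> 'a"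
  where "score p p' gV x = (1 / p x) *\<^sub>R p' x + gV x"

definition P_op :: "('a::euclidean_space \<Rightarrow> 'a \<Rightarrow> real) \<Rightarrow> ('a \<Rightarrow> real) \<Rightarrow> ('a \<Rightarrow> 'a) \<Rightarrow> 'a \<Rightarrow> 'a"
  where "P_op k p f y = (\<integral>x. (k x y * p x) *\<^sub>R f x \<partial>lborel)"

definition svgd_map :: "real \<Rightarrow> ('a::euclidean_space \<Rightarrow> 'a \<Rightarrow> real) \<Rightarrow> ('a \<Rightarrow> real) \<Rightarrow> ('a \<Rightarrow> 'a) \<Rightarrow> 'a \<Rightarrow> 'a"
  where "svgd_map \<gamma> k p s x = x - \<gamma> *\<^sub>R P_op k p s x"

text \<open>I_Stein(mu|pi) = || S_mu g ||_H^2 = sum_i || integral of g_i(x) k(x,.) d mu(x) ||_{H_0}^2,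
  computed in the feature space, with g = nabla log(mu/pi).\<close>
definition I_Stein :: "('a::euclidean_space \<Rightarrow> 'h::{real_inner,banach,second_countable_topology})
    \<Rightarrow> ('a \<Rightarrow> real) \<Rightarrow> ('a \<Rightarrow> 'a) \<Rightarrow> real"
  where "I_Stein \<Phi> p g = (\<Sum>i\<in>Basis. (norm (\<integral>x. (p x * (g x \<bullet> i)) *\<^sub>R \<Phi> x \<partial>lborel))\<^sup>2)"

end

theory Submission imports Defs begin

lemma lborel_shift_integral:
  fixes g :: "'a::euclidean_space \<Rightarrow> real" and c :: 'a
  assumes [measurable]: "g \<in> borel_measurable borel"
  shows "(\<integral>x. g x \<partial>lborel) = (\<integral>x. g (x + c) \<partial>lborel)"
proof -
  have "(\<integral>x. g x \<partial>lborel) = (\<integral>x. g x \<partial>(distr lborel borel ((+) c)))"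
    by (simp add: lborel_distr_plus)
  also have "\<dots> = (\<integral>x. g (c + x) \<partial>lborel)"
    by (rule integral_distr) auto
  finally show ?thesis by (simp add: add.commute)
qed

lemma lborel_shift_nn_integral:
  fixes g :: "'a::euclidean_space \<Rightarrow> ennreal" and c :: 'a
  assumes [measurable]: "g \<in> borel_measurable borel"
  shows "(\<integral>\<^sup>+x. g x \<partial>lborel) = (\<integral>\<^sup>+x. g (x + c) \<partial>lborel)"
proof -
  have "(\<integral>\<^sup>+x. g x \<partial>lborel) = (\<integral>\<^sup>+x. g x \<partial>(distr lborel borel ((+) c)))"
    by (simp add: lborel_distr_plus)
  also have "\<dots> = (\<integral>\<^sup>+x. g (c + x) \<partial>lborel)"
    by (rule nn_integral_distr) auto
  finally show ?thesis by (simp add: add.commute)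
qed

lemma lborel_shift_integrable:
  fixes g :: "'a::euclidean_space \<Rightarrow> real" and c :: 'a
  assumes [measurable]: "g \<in> borel_measurable borel" and "integrable lborel g"
  shows "integrable lborel (\<lambda>x. g (x + c))"
proof -
  have "integrable (distr lborel borel ((+) c)) g"
    using assms by (simp add: lborel_distr_plus)
  then have "integrable lborel (\<lambda>x. g (c + x))"
    by (subst (asm) integrable_distr_eq) auto
  then show ?thesis by (simp add: add.commute)
qed

lemma ibp_step:
  fixes p :: "'a::euclidean_space \<Rightarrow> real" and p' :: "'a \<Rightarrow> 'a" and f :: "'a \<Rightarrow> real" and e :: 'a
  assumes pd: "\<And>x. (p has_derivative (\<lambda>h. p' x \<bullet> h)) (at x)"
    and p'c: "continuous_on UNIV p'"
    and p'i: "integrable lborel (\<lambda>x. norm (p' x))"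
    and pi: "integrable lborel p" and pnn: "\<And>x. p x \<ge> 0"
    and fc: "continuous_on UNIV f" and fb: "\<And>x. \<bar>f x\<bar> \<le> F"
    and fl: "\<And>x t. \<bar>f (x + t *\<^sub>R e) - f x\<bar> \<le> L * \<bar>t\<bar>"
    and t: "t > 0"
  shows "\<bar>\<integral>s. indicator {0..t} s * (\<integral>y. (p' y \<bullet> e) * f (y - s *\<^sub>R e) \<partial>lborel) \<partial>lborel\<bar>
           \<le> L * t * (\<integral>x. p x \<partial>lborel)"
proof -
  have pc: "continuous_on UNIV p"
    using pd by (meson has_derivative_continuous continuous_at_imp_continuous_on)
  have [measurable]: "p \<in> borel_measurable borel" "p' \<in> borel_measurable borel" "f \<in> borel_measurable borel"
    using pc p'c fc by (auto intro: borel_measurable_continuous_onI)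
  have F0: "F \<ge> 0" using fb[of 0] by linarith
  define G :: "real \<times> 'a \<Rightarrow> real" where
    "G = (\<lambda>(s, x). indicator {0..t} s * ((p' (x + s *\<^sub>R e) \<bullet> e) * f x))"
  have Gm: "G \<in> borel_measurable (lborel \<Otimes>\<^sub>M lborel)"
    unfolding G_def by measurable

  define N where "N = (\<integral>x. norm (p' x) \<partial>lborel)"
  have NN: "(\<integral>\<^sup>+x. ennreal (norm (p' x)) \<partial>lborel) = ennreal N"
    unfolding N_def by (rule nn_integral_eq_integral[OF p'i]) auto
  have inner: "(\<integral>\<^sup>+x. ennreal (norm (G (s,x))) \<partial>lborel) \<le> ennreal (indicator {0..t} s * (F * norm e * N))" for s
  proof -
    have "(\<integral>\<^sup>+x. ennreal (norm (G (s,x))) \<partial>lborel)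
       \<le> (\<integral>\<^sup>+x. ennreal (indicator {0..t} s * (F * norm e)) * ennreal (norm (p' (x + s *\<^sub>R e))) \<partial>lborel)"
    proof (intro nn_integral_mono)
      fix x
      have "norm (G (s,x)) = indicator {0..t} s * (\<bar>p' (x + s *\<^sub>R e) \<bullet> e\<bar> * \<bar>f x\<bar>)"
        by (simp add: G_def abs_mult indicator_def)
      also have "\<dots> \<le> indicator {0..t} s * ((norm (p' (x + s *\<^sub>R e)) * norm e) * F)"
        by (intro mult_left_mono mult_mono Cauchy_Schwarz_ineq2 fb) (auto simp: indicator_def)
      finally have "norm (G (s,x)) \<le> indicator {0..t} s * (F * norm e) * norm (p' (x + s *\<^sub>R e))"
        by (simp add: ac_simps)
      then show "ennreal (norm (G (s,x))) \<le> ennreal (indicator {0..t} s * (F * norm e)) * ennreal (norm (p' (x + s *\<^sub>R e)))"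
        by (simp add: ennreal_mult'[symmetric] F0 ennreal_leI)
    qed
    also have "\<dots> = ennreal (indicator {0..t} s * (F * norm e)) * (\<integral>\<^sup>+x. ennreal (norm (p' (x + s *\<^sub>R e))) \<partial>lborel)"
      by (rule nn_integral_cmult) measurable
    also have "(\<integral>\<^sup>+x. ennreal (norm (p' (x + s *\<^sub>R e))) \<partial>lborel) = ennreal N"
      using lborel_shift_nn_integral[of "\<lambda>x. ennreal (norm (p' x))" "s *\<^sub>R e"] NN by simp
    finally show ?thesis
      by (simp add: ennreal_mult'[symmetric] F0 N_def mult.assoc)
  qed
  have Gi: "integrable (lborel \<Otimes>\<^sub>M lborel) G"
  proof (rule integrableI_bounded[OF Gm])
    have "(\<integral>\<^sup>+z. ennreal (norm (G z)) \<partial>(lborel \<Otimes>\<^sub>M lborel))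
        = (\<integral>\<^sup>+s. (\<integral>\<^sup>+x. ennreal (norm (G (s,x))) \<partial>lborel) \<partial>lborel)"
      by (rule lborel.nn_integral_fst[symmetric]) (use Gm in measurable)
    also have "\<dots> \<le> (\<integral>\<^sup>+s. ennreal (F * norm e * N) * indicator {0..t} s \<partial>lborel)"
      by (intro nn_integral_mono order_trans[OF inner]) (auto simp: indicator_def)
    also have "\<dots> = ennreal (F * norm e * N) * ennreal t"
      using t by (subst nn_integral_cmult_indicator) auto
    also have "\<dots> < \<infinity>" by (simp add: ennreal_mult_less_top)
    finally show "(\<integral>\<^sup>+z. ennreal (norm (G z)) \<partial>(lborel \<Otimes>\<^sub>M lborel)) < \<infinity>" .
  qed

  have fub: "(\<integral>x. (\<integral>s. G (s,x) \<partial>lborel) \<partial>lborel) = (\<integral>s. (\<integral>x. G (s,x) \<partial>lborel) \<partial>lborel)"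
    using lborel_pair.Fubini_integral[of "\<lambda>s x. G (s,x)"] Gi by simp
  have sideS: "(\<integral>x. G (s,x) \<partial>lborel) = indicator {0..t} s * (\<integral>y. (p' y \<bullet> e) * f (y - s *\<^sub>R e) \<partial>lborel)" for s
  proof -
    have "(\<integral>y. (p' y \<bullet> e) * f (y - s *\<^sub>R e) \<partial>lborel) = (\<integral>x. (p' (x + s *\<^sub>R e) \<bullet> e) * f x \<partial>lborel)"
      using lborel_shift_integral[of "\<lambda>y. (p' y \<bullet> e) * f (y - s *\<^sub>R e)" "s *\<^sub>R e"] by simp
    then show ?thesis by (simp add: G_def)
  qed
  have sideX: "(\<integral>s. G (s,x) \<partial>lborel) = f x * (p (x + t *\<^sub>R e) - p x)" for x
  proof -
    have "(\<integral>s. G (s,x) \<partial>lborel) = (\<integral>s. indicator {0..t} s * (p' (x + s *\<^sub>R e) \<bullet> e) \<partial>lborel) * f x"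
      unfolding G_def by (simp add: mult.assoc[symmetric])
    also have "(\<integral>s. indicator {0..t} s * (p' (x + s *\<^sub>R e) \<bullet> e) \<partial>lborel)
        = (LBINT s=0..t. p' (x + s *\<^sub>R e) \<bullet> e)"
      unfolding zero_ereal_def using t interval_integral_Icc[of 0 t "\<lambda>s. p' (x + s *\<^sub>R e) \<bullet> e"]
      by (simp add: set_lebesgue_integral_def)
    also have "\<dots> = (LBINT s=ereal 0..ereal t. p' (x + s *\<^sub>R e) \<bullet> e)"
      by (simp add: zero_ereal_def)
    also have "\<dots> = p (x + t *\<^sub>R e) - p (x + 0 *\<^sub>R e)"
    proof (rule interval_integral_FTC_finite)
      show "continuous_on {min 0 t..max 0 t} (\<lambda>s. p' (x + s *\<^sub>R e) \<bullet> e)"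
        by (intro continuous_intros continuous_on_compose2[OF p'c]) auto
      fix s
      have "((\<lambda>s. x + s *\<^sub>R e) has_derivative (\<lambda>h. h *\<^sub>R e)) (at s)"
        by (auto intro!: derivative_eq_intros)
      from has_derivative_compose[OF this pd]
      have "((\<lambda>s. p (x + s *\<^sub>R e)) has_derivative (\<lambda>h. p' (x + s *\<^sub>R e) \<bullet> (h *\<^sub>R e))) (at s)" .
      then have "((\<lambda>s. p (x + s *\<^sub>R e)) has_vector_derivative (p' (x + s *\<^sub>R e) \<bullet> e)) (at s)"
        by (simp add: has_vector_derivative_def mult.commute)
      then show "((\<lambda>s. p (x + s *\<^sub>R e)) has_vector_derivative (p' (x + s *\<^sub>R e) \<bullet> e)) (at s within {min 0 t..max 0 t})"
        by (rule has_vector_derivative_at_within)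
    qed
    finally show ?thesis by (simp add: mult.commute)
  qed
  have ifp: "integrable lborel (\<lambda>x. f (x + c) * p x)" for c
    by (rule Bochner_Integration.integrable_bound[of lborel "\<lambda>x. F * p x"])
       (use pi fb pnn F0 in \<open>auto intro!: mult_right_mono simp: abs_mult\<close>)
  have ifp2: "integrable lborel (\<lambda>x. f x * p (x + c))" for c
  proof (rule Bochner_Integration.integrable_bound[of lborel "\<lambda>x. F * p (x + c)"])
    show "integrable lborel (\<lambda>x. F * p (x + c))"
      using lborel_shift_integrable[OF _ pi, of c] by auto
  qed (use fb pnn F0 in \<open>auto intro!: mult_right_mono simp: abs_mult\<close>)
  have "(\<integral>x. f x * (p (x + t *\<^sub>R e) - p x) \<partial>lborel)
      = (\<integral>x. f x * p (x + t *\<^sub>R e) \<partial>lborel) - (\<integral>x. f (x + 0) * p x \<partial>lborel)"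
    using ifp2[of "t *\<^sub>R e"] ifp[of 0] by (simp add: right_diff_distrib)
  also have "(\<integral>x. f x * p (x + t *\<^sub>R e) \<partial>lborel) = (\<integral>x. f (x + (- t *\<^sub>R e)) * p x \<partial>lborel)"
    using lborel_shift_integral[of "\<lambda>x. f (x + (- t *\<^sub>R e)) * p x" "t *\<^sub>R e"] by simp
  also have "\<dots> - (\<integral>x. f (x + 0) * p x \<partial>lborel) = (\<integral>x. p x * (f (x + (- t) *\<^sub>R e) - f x) \<partial>lborel)"
    using ifp[of "- t *\<^sub>R e"] ifp[of 0] by (simp add: right_diff_distrib mult.commute)
  finally have eq1: "(\<integral>x. f x * (p (x + t *\<^sub>R e) - p x) \<partial>lborel) = (\<integral>x. p x * (f (x + (- t) *\<^sub>R e) - f x) \<partial>lborel)" .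
  have "\<bar>\<integral>x. p x * (f (x + (- t) *\<^sub>R e) - f x) \<partial>lborel\<bar> \<le> (\<integral>x. p x * (L * t) \<partial>lborel)"
  proof (rule integral_abs_bound_integral)
    show "integrable lborel (\<lambda>x. p x * (f (x + (- t) *\<^sub>R e) - f x))"
      using ifp[of "- t *\<^sub>R e"] ifp[of 0] by (simp add: right_diff_distrib mult.commute)
    show "integrable lborel (\<lambda>x. p x * (L * t))" using pi by simp
    fix x
    show "\<bar>p x * (f (x + (- t) *\<^sub>R e) - f x)\<bar> \<le> p x * (L * t)"
      using fl[of x "- t"] pnn[of x] t by (simp add: abs_mult mult_left_mono)
  qed
  also have "\<dots> = L * t * (\<integral>x. p x \<partial>lborel)" by (simp add: mult.commute)
  finally show ?thesis
    using fub sideS sideX eq1 by simp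
qed

lemma ibp_bound:
  fixes p :: "'a::euclidean_space \<Rightarrow> real" and p' :: "'a \<Rightarrow> 'a" and f :: "'a \<Rightarrow> real" and e :: 'a
  assumes pd: "\<And>x. (p has_derivative (\<lambda>h. p' x \<bullet> h)) (at x)"
    and p'c: "continuous_on UNIV p'"
    and p'i: "integrable lborel (\<lambda>x. norm (p' x))"
    and pi: "integrable lborel p" and pnn: "\<And>x. p x \<ge> 0"
    and fc: "continuous_on UNIV f" and fb: "\<And>x. \<bar>f x\<bar> \<le> F"
    and fl: "\<And>x t. \<bar>f (x + t *\<^sub>R e) - f x\<bar> \<le> L * \<bar>t\<bar>"
  shows "\<bar>\<integral>x. (p' x \<bullet> e) * f x \<partial>lborel\<bar> \<le> L * (\<integral>x. p x \<partial>lborel)"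
proof -
  have pc: "continuous_on UNIV p"
    using pd by (meson has_derivative_continuous continuous_at_imp_continuous_on)
  have [measurable]: "p \<in> borel_measurable borel" "p' \<in> borel_measurable borel" "f \<in> borel_measurable borel"
    using pc p'c fc by (auto intro: borel_measurable_continuous_onI)
  have F0: "F \<ge> 0" using fb[of 0] by linarith
  define h where "h s = (\<integral>y. (p' y \<bullet> e) * f (y - s *\<^sub>R e) \<partial>lborel)" for s
  have fcont: "isCont f x" for x
    using fc by (simp add: continuous_on_eq_continuous_at)
  have hc: "isCont h s0" for s0
    unfolding continuous_at_sequentially comp_def
  proof (intro allI impI)
    fix X :: "nat \<Rightarrow> real" assume X: "X \<longlonglongrightarrow> s0"
    show "(\<lambda>n. h (X n)) \<longlonglongrightarrow> h s0" unfolding h_def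
    proof (rule integral_dominated_convergence[where w="\<lambda>y. norm (p' y) * norm e * F"])
      show "integrable lborel (\<lambda>y. norm (p' y) * norm e * F)"
        using p'i by simp
      show "AE y in lborel. (\<lambda>n. (p' y \<bullet> e) * f (y - X n *\<^sub>R e)) \<longlonglongrightarrow> (p' y \<bullet> e) * f (y - s0 *\<^sub>R e)"
      proof (intro AE_I2 tendsto_mult_left)
        fix y
        have "(\<lambda>n. y - X n *\<^sub>R e) \<longlonglongrightarrow> y - s0 *\<^sub>R e"
          by (intro tendsto_intros X)
        then show "(\<lambda>n. f (y - X n *\<^sub>R e)) \<longlonglongrightarrow> f (y - s0 *\<^sub>R e)"
          by (rule isCont_tendsto_compose[OF fcont])
      qed
      fix n
      show "AE y in lborel. norm ((p' y \<bullet> e) * f (y - X n *\<^sub>R e)) \<le> norm (p' y) * norm e * F"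
      proof (intro AE_I2)
        fix y
        have "\<bar>p' y \<bullet> e\<bar> * \<bar>f (y - X n *\<^sub>R e)\<bar> \<le> (norm (p' y) * norm e) * F"
          by (intro mult_mono Cauchy_Schwarz_ineq2 fb) auto
        then show "norm ((p' y \<bullet> e) * f (y - X n *\<^sub>R e)) \<le> norm (p' y) * norm e * F"
          by (simp add: abs_mult)
      qed
    qed measurable
  qed
  have h0: "h 0 = (\<integral>x. (p' x \<bullet> e) * f x \<partial>lborel)" by (simp add: h_def)
  have L0: "L \<ge> 0" using fl[of 0 1] by linarith
  have I0: "(\<integral>x. p x \<partial>lborel) \<ge> 0" using pnn by (simp add: integral_nonneg)
  define c where "c = L * (\<integral>x. p x \<partial>lborel)"
  show ?thesis
  proof (rule ccontr)
    assume "\<not> ?thesis"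
    then have gt: "\<bar>h 0\<bar> > c" unfolding h0 c_def by simp
    define \<epsilon> where "\<epsilon> = \<bar>h 0\<bar> - c"
    have \<epsilon>: "\<epsilon> > 0" using gt by (simp add: \<epsilon>_def)
    obtain d where d: "d > 0" "\<And>s. dist s 0 < d \<Longrightarrow> dist (h s) (h 0) < \<epsilon> / 2"
      using hc[of 0] \<epsilon> unfolding continuous_at_eps_delta by (meson half_gt_zero)
    define t where "t = d / 2"
    have t: "t > 0" "t < d" using d by (auto simp: t_def)
    have ib: "\<bar>\<integral>s. indicator {0..t} s * h s \<partial>lborel\<bar> \<le> t * c"
      using ibp_step[OF pd p'c p'i pi pnn fc fb fl t(1)] unfolding h_def c_def by (simp add: mult_ac)
    have hi: "integrable lborel (\<lambda>s. indicator {0..t} s * h s)"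
      using borel_integrable_atLeastAtMost[of 0 t h] hc by (simp add: mult.commute)
    have ci: "integrable lborel (\<lambda>s. indicator {0..t} s * h 0)"
      using borel_integrable_atLeastAtMost[of 0 t "\<lambda>_. h 0"] by (simp add: mult.commute)
    have mt: "measure lborel {0..t} = t"
      using t by (simp add: measure_def emeasure_lborel_Icc_eq)
    have cint: "(\<integral>s. indicator {0..t} s * h 0 \<partial>lborel) = t * h 0"
      using mt by simp
    have "\<bar>\<integral>s. indicator {0..t} s * (h s - h 0) \<partial>lborel\<bar> \<le> (\<integral>s. indicator {0..t} s * (\<epsilon> / 2) \<partial>lborel)"
    proof (rule integral_abs_bound_integral)
      show "integrable lborel (\<lambda>s. indicator {0..t} s * (h s - h 0))"
        using hi ci by (simp add: right_diff_distrib)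
      show "integrable lborel (\<lambda>s. indicator {0..t} s * (\<epsilon> / 2))"
        using borel_integrable_atLeastAtMost[of 0 t "\<lambda>_. \<epsilon> / 2"] by (simp add: mult.commute)
      fix s
      show "\<bar>indicator {0..t} s * (h s - h 0)\<bar> \<le> indicator {0..t} s * (\<epsilon> / 2)"
      proof (cases "s \<in> {0..t}")
        case True
        then have "dist s 0 < d" using t by auto
        then have "\<bar>h s - h 0\<bar> < \<epsilon> / 2" using d(2) by (simp add: dist_real_def)
        then show ?thesis using True by simp
      qed simp
    qed
    also have "\<dots> = t * (\<epsilon> / 2)" using mt by simp
    finally have b2: "\<bar>\<integral>s. indicator {0..t} s * (h s - h 0) \<partial>lborel\<bar> \<le> t * (\<epsilon> / 2)" .
    have split: "(\<integral>s. indicator {0..t} s * (h s - h 0) \<partial>lborel)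
        = (\<integral>s. indicator {0..t} s * h s \<partial>lborel) - t * h 0"
      using hi ci cint by (simp add: right_diff_distrib)
    have tabs: "t * \<bar>h 0\<bar> = \<bar>t * h 0\<bar>" using t by (simp add: abs_mult)
    have "t * \<bar>h 0\<bar> \<le> t * c + t * (\<epsilon> / 2)"
      unfolding tabs using ib b2 split by arith
    then have "t * \<bar>h 0\<bar> \<le> t * (c + \<epsilon> / 2)" by (simp add: distrib_left)
    then have "\<bar>h 0\<bar> \<le> c + \<epsilon> / 2"
      using t by (simp add: mult_le_cancel_left_pos)
    then show False using \<epsilon> unfolding \<epsilon>_def by (simp add: field_simps)
  qed
qed


lemma vec_bound:
  fixes P :: "'a::euclidean_space \<Rightarrow> real" and P' :: "'a \<Rightarrow> 'a" and gV :: "'a \<Rightarrow> 'a"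
    and \<Phi> :: "'a \<Rightarrow> 'h::{real_inner,banach,second_countable_topology}" and i :: 'a
  assumes Pd: "\<And>x. (P has_derivative (\<lambda>h. P' x \<bullet> h)) (at x)"
    and P'c: "continuous_on UNIV P'"
    and P'i: "integrable lborel (\<lambda>x. norm (P' x))"
    and Pi: "integrable lborel P" and Ppos: "\<And>x. P x > 0" and P1: "(\<integral>x. P x \<partial>lborel) = 1"
    and mom: "integrable lborel (\<lambda>x. norm x * P x)" and momb: "(\<integral>x. norm x * P x \<partial>lborel) \<le> R"
    and gVc: "continuous_on UNIV gV" and gVb: "\<And>x. norm (gV x) \<le> G0 + M * norm x" and M: "M \<ge> 0"
    and \<Phi>c: "continuous_on UNIV \<Phi>" and \<Phi>b: "\<And>x. norm (\<Phi> x) \<le> B"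
    and \<Phi>l: "\<And>x t. norm (\<Phi> (x + t *\<^sub>R i) - \<Phi> x) \<le> B * \<bar>t\<bar>"
    and B: "B \<ge> 0" and i: "norm i = 1"
  shows "norm (\<integral>x. (P x * (score P P' gV x \<bullet> i)) *\<^sub>R \<Phi> x \<partial>lborel) \<le> B * (1 + G0 + M * R)"
proof -
  have Pc: "continuous_on UNIV P"
    using Pd by (meson has_derivative_continuous continuous_at_imp_continuous_on)
  have [measurable]: "P \<in> borel_measurable borel" "P' \<in> borel_measurable borel" "gV \<in> borel_measurable borel"
     "\<Phi> \<in> borel_measurable borel"
    using Pc P'c gVc \<Phi>c by (auto intro: borel_measurable_continuous_onI)
  have G0: "G0 \<ge> 0" using gVb[of 0] by (metis norm_ge_zero norm_zero mult_zero_right add_0_right order_trans)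
  have "0 \<le> (\<integral>x. norm x * P x \<partial>lborel)"
    using Ppos by (intro Bochner_Integration.integral_nonneg) (simp add: less_imp_le)
  then have R0: "R \<ge> 0" using momb by linarith
  define a where "a x = P' x \<bullet> i" for x
  define b where "b x = P x * (gV x \<bullet> i)" for x
  have eq: "P x * (score P P' gV x \<bullet> i) = a x + b x" for x
    using Ppos[of x] by (simp add: score_def a_def b_def inner_add_left field_simps)
  have bb: "\<bar>b x\<bar> \<le> G0 * P x + M * (norm x * P x)" for x
  proof -
    have "\<bar>b x\<bar> = P x * \<bar>gV x \<bullet> i\<bar>" using Ppos[of x] by (simp add: b_def abs_mult)
    also have "\<dots> \<le> P x * (G0 + M * norm x)"
      using Ppos[of x] Cauchy_Schwarz_ineq2[of "gV x" i] i gVb[of x]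
      by (intro mult_left_mono) auto
    finally show ?thesis by (simp add: algebra_simps)
  qed
  have ab: "\<bar>a x\<bar> \<le> norm (P' x)" for x
    using Cauchy_Schwarz_ineq2[of "P' x" i] i by (simp add: a_def)
  have [measurable]: "a \<in> borel_measurable borel" "b \<in> borel_measurable borel"
    unfolding a_def[abs_def] b_def[abs_def] by measurable
  have ia: "integrable lborel (\<lambda>x. a x *\<^sub>R \<Phi> x)"
  proof (rule Bochner_Integration.integrable_bound[of lborel "\<lambda>x. B * norm (P' x)"])
    show "integrable lborel (\<lambda>x. B * norm (P' x))" using P'i by simp
    show "AE x in lborel. norm (a x *\<^sub>R \<Phi> x) \<le> norm (B * norm (P' x))"
    proof (intro AE_I2)
      fix x
      have "\<bar>a x\<bar> * norm (\<Phi> x) \<le> norm (P' x) * B"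
        using ab[of x] \<Phi>b[of x] by (intro mult_mono) auto
      then show "norm (a x *\<^sub>R \<Phi> x) \<le> norm (B * norm (P' x))"
        using B by (simp add: mult.commute)
    qed
  qed measurable
  have ib: "integrable lborel (\<lambda>x. b x *\<^sub>R \<Phi> x)"
  proof (rule Bochner_Integration.integrable_bound[of lborel "\<lambda>x. B * (G0 * P x + M * (norm x * P x))"])
    show "integrable lborel (\<lambda>x. B * (G0 * P x + M * (norm x * P x)))" using Pi mom by simp
    show "AE x in lborel. norm (b x *\<^sub>R \<Phi> x) \<le> norm (B * (G0 * P x + M * (norm x * P x)))"
    proof (intro AE_I2)
      fix x
      have "norm (b x *\<^sub>R \<Phi> x) = \<bar>b x\<bar> * norm (\<Phi> x)" by simp
      also have "\<dots> \<le> (G0 * P x + M * (norm x * P x)) * B"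
        using bb[of x] \<Phi>b[of x] by (intro mult_mono) auto
      also have "\<dots> \<le> norm (B * (G0 * P x + M * (norm x * P x)))" by (simp add: mult.commute)
      finally show "norm (b x *\<^sub>R \<Phi> x) \<le> norm (B * (G0 * P x + M * (norm x * P x)))" .
    qed
  qed measurable
  define v where "v = (\<integral>x. (P x * (score P P' gV x \<bullet> i)) *\<^sub>R \<Phi> x \<partial>lborel)"
  have v2: "v = (\<integral>x. (a x *\<^sub>R \<Phi> x + b x *\<^sub>R \<Phi> x) \<partial>lborel)"
    unfolding v_def eq by (simp add: scaleR_add_left)
  show ?thesis
  proof (cases "v = 0")
    case True then show ?thesis using B G0 M R0 by (simp add: v_def[symmetric])
  next
    case False
    define f where "f x = \<Phi> x \<bullet> v" for x
    have "v \<bullet> v = (\<integral>x. (a x *\<^sub>R \<Phi> x + b x *\<^sub>R \<Phi> x) \<bullet> v \<partial>lborel)"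
      unfolding v2 using ia ib by (subst integral_inner_left) auto
    also have "\<dots> = (\<integral>x. a x * f x + b x * f x \<partial>lborel)"
      by (simp add: f_def inner_add_left)
    also have "\<dots> = (\<integral>x. a x * f x \<partial>lborel) + (\<integral>x. b x * f x \<partial>lborel)"
    proof (rule Bochner_Integration.integral_add)
      show "integrable lborel (\<lambda>x. a x * f x)"
        using integrable_inner_left[OF ia, of v] by (simp add: f_def)
      show "integrable lborel (\<lambda>x. b x * f x)"
        using integrable_inner_left[OF ib, of v] by (simp add: f_def)
    qed
    finally have vv: "v \<bullet> v = (\<integral>x. a x * f x \<partial>lborel) + (\<integral>x. b x * f x \<partial>lborel)" .
    have fc: "continuous_on UNIV f" unfolding f_def[abs_def] by (intro continuous_intros \<Phi>c)
    have fb: "\<bar>f x\<bar> \<le> B * norm v" for x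
      unfolding f_def using Cauchy_Schwarz_ineq2[of "\<Phi> x" v] \<Phi>b[of x]
      by (meson mult_right_mono norm_ge_zero order_trans)
    have fl: "\<bar>f (x + t *\<^sub>R i) - f x\<bar> \<le> (B * norm v) * \<bar>t\<bar>" for x t
    proof -
      have "\<bar>f (x + t *\<^sub>R i) - f x\<bar> = \<bar>(\<Phi> (x + t *\<^sub>R i) - \<Phi> x) \<bullet> v\<bar>"
        by (simp add: f_def inner_diff_left)
      also have "\<dots> \<le> norm (\<Phi> (x + t *\<^sub>R i) - \<Phi> x) * norm v" by (rule Cauchy_Schwarz_ineq2)
      also have "\<dots> \<le> (B * \<bar>t\<bar>) * norm v" by (intro mult_right_mono \<Phi>l) auto
      finally show ?thesis by (simp add: mult_ac)
    qed
    have A: "\<bar>\<integral>x. a x * f x \<partial>lborel\<bar> \<le> B * norm v"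
      using ibp_bound[OF Pd P'c P'i Pi _ fc fb fl] Ppos P1 by (simp add: a_def less_imp_le)
    have "\<bar>\<integral>x. b x * f x \<partial>lborel\<bar> \<le> (\<integral>x. (G0 * P x + M * (norm x * P x)) * (B * norm v) \<partial>lborel)"
    proof (rule integral_abs_bound_integral)
      show "integrable lborel (\<lambda>x. b x * f x)"
        using integrable_inner_left[OF ib, of v] by (simp add: f_def)
      show "integrable lborel (\<lambda>x. (G0 * P x + M * (norm x * P x)) * (B * norm v))"
        using Pi mom by simp
      fix x show "\<bar>b x * f x\<bar> \<le> (G0 * P x + M * (norm x * P x)) * (B * norm v)"
        unfolding abs_mult using bb[of x] fb[of x] by (intro mult_mono) auto
    qed
    also have "\<dots> = (G0 + M * (\<integral>x. norm x * P x \<partial>lborel)) * (B * norm v)"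
      using Pi mom P1 by simp
    also have "\<dots> \<le> (G0 + M * R) * (B * norm v)"
      using momb M B by (intro mult_right_mono add_left_mono mult_left_mono) auto
    finally have Bb: "\<bar>\<integral>x. b x * f x \<partial>lborel\<bar> \<le> (G0 + M * R) * (B * norm v)" .
    have "norm v * norm v \<le> norm v * (B * (1 + G0 + M * R))"
      using vv A Bb by (simp add: dot_square_norm power2_eq_square algebra_simps)
    then have "norm v \<le> B * (1 + G0 + M * R)"
      using False by (simp add: mult_le_cancel_left_pos)
    then show ?thesis by (simp add: v_def)
  qed
qed

lemma dir_lip:
  fixes \<Phi> :: "'a::euclidean_space \<Rightarrow> 'h::real_inner"
  assumes der: "\<And>y. ((\<lambda>t. \<Phi> (y + t *\<^sub>R i)) has_vector_derivative D y) (at 0)"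
    and bnd: "\<And>y. norm (D y) \<le> B"
  shows "norm (\<Phi> (x + t *\<^sub>R i) - \<Phi> x) \<le> B * \<bar>t\<bar>"
proof -
  define g where "g s = \<Phi> (x + s *\<^sub>R i)" for s
  have gd: "(g has_vector_derivative D (x + s *\<^sub>R i)) (at s)" for s
  proof -
    have d1: "((\<lambda>s'. s' - s) has_vector_derivative 1) (at s)"
      by (auto intro!: derivative_eq_intros)
    have "(((\<lambda>u. \<Phi> ((x + s *\<^sub>R i) + u *\<^sub>R i)) \<circ> (\<lambda>s'. s' - s)) has_vector_derivative (1 *\<^sub>R D (x + s *\<^sub>R i))) (at s)"
      by (rule vector_diff_chain_at[OF d1]) (simp add: der)
    moreover have "((\<lambda>u. \<Phi> ((x + s *\<^sub>R i) + u *\<^sub>R i)) \<circ> (\<lambda>s'. s' - s)) = g"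
      by (auto simp: g_def algebra_simps fun_eq_iff)
    ultimately show ?thesis by simp
  qed
  have on: "onorm (\<lambda>h. h *\<^sub>R D (x + s *\<^sub>R i)) \<le> B" for s
  proof -
    have "onorm (\<lambda>h::real. h *\<^sub>R D (x + s *\<^sub>R i)) \<le> onorm (\<lambda>h::real. h) * norm (D (x + s *\<^sub>R i))"
      by (rule onorm_scaleR_left_lemma) (rule bounded_linear_ident)
    also have "\<dots> \<le> B" using bnd[of "x + s *\<^sub>R i"] by (simp add: onorm_id)
    finally show ?thesis .
  qed
  have "norm (g t - g 0) \<le> B * norm (t - 0)"
    apply (rule differentiable_bound[where S=UNIV and f'="\<lambda>s h. h *\<^sub>R D (x + s *\<^sub>R i)"])
    using gd on by (auto simp: has_vector_derivative_def)
  then show ?thesis by (simp add: g_def)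
qed
lemma tele:
  fixes \<Phi> :: "'a::euclidean_space \<Rightarrow> 'h::real_normed_vector"
  assumes d: "\<And>x t i. i \<in> Basis \<Longrightarrow> norm (\<Phi> (x + t *\<^sub>R i) - \<Phi> x) \<le> B * \<bar>t\<bar>"
  shows "finite S \<Longrightarrow> S \<subseteq> Basis \<Longrightarrow> norm (\<Phi> (z + (\<Sum>i\<in>S. c i *\<^sub>R i)) - \<Phi> z) \<le> B * (\<Sum>i\<in>S. \<bar>c i\<bar>)"
proof (induction S arbitrary: z rule: finite_induct)
  case empty then show ?case by simp
next
  case (insert j S)
  have e: "z + (\<Sum>i\<in>insert j S. c i *\<^sub>R i) = (z + (\<Sum>i\<in>S. c i *\<^sub>R i)) + c j *\<^sub>R j"
    using insert by (simp add: algebra_simps)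
  have "norm (\<Phi> (z + (\<Sum>i\<in>insert j S. c i *\<^sub>R i)) - \<Phi> z)
     \<le> norm (\<Phi> ((z + (\<Sum>i\<in>S. c i *\<^sub>R i)) + c j *\<^sub>R j) - \<Phi> (z + (\<Sum>i\<in>S. c i *\<^sub>R i)))
       + norm (\<Phi> (z + (\<Sum>i\<in>S. c i *\<^sub>R i)) - \<Phi> z)"
    unfolding e by (rule norm_diff_triangle_le) (rule order_refl)+
  also have "\<dots> \<le> B * \<bar>c j\<bar> + B * (\<Sum>i\<in>S. \<bar>c i\<bar>)"
    using insert d[of j] by (intro add_mono) auto
  finally show ?case using insert by (simp add: distrib_left)
qed

lemma full_lip:
  fixes \<Phi> :: "'a::euclidean_space \<Rightarrow> 'h::real_normed_vector"
  assumes d: "\<And>x t i. i \<in> Basis \<Longrightarrow> norm (\<Phi> (x + t *\<^sub>R i) - \<Phi> x) \<le> B * \<bar>t\<bar>"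
    and B: "B \<ge> 0"
  shows "norm (\<Phi> y - \<Phi> x) \<le> (B * DIM('a)) * norm (y - x)"
proof -
  have "y = x + (\<Sum>i\<in>Basis. ((y - x) \<bullet> i) *\<^sub>R i)"
    by (simp add: euclidean_representation)
  then have "norm (\<Phi> y - \<Phi> x) = norm (\<Phi> (x + (\<Sum>i\<in>Basis. ((y - x) \<bullet> i) *\<^sub>R i)) - \<Phi> x)"
    by simp
  also have "\<dots> \<le> B * (\<Sum>i\<in>Basis. \<bar>(y - x) \<bullet> i\<bar>)"
    by (rule tele[OF d]) auto
  also have "\<dots> \<le> B * (\<Sum>i\<in>(Basis::'a set). norm (y - x))"
    by (intro mult_left_mono sum_mono B Basis_le_norm) 
  also have "\<dots> = (B * DIM('a)) * norm (y - x)" by simp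
  finally show ?thesis .
qed

theorem lemma7:
  fixes V :: "'a::euclidean_space \<Rightarrow> real"
    and gV :: "'a \<Rightarrow> 'a"
    and HV :: "'a \<Rightarrow> 'a \<Rightarrow>\<^sub>L 'a"
    and k :: "'a \<Rightarrow> 'a \<Rightarrow> real"
    and \<Phi> :: "'a \<Rightarrow> 'h::{real_inner,banach,second_countable_topology}"
    and D\<Phi> :: "'a \<Rightarrow> 'a \<Rightarrow> 'h"
    and p :: "nat \<Rightarrow> 'a \<Rightarrow> real"
    and p' :: "nat \<Rightarrow> 'a \<Rightarrow> 'a"
    and \<gamma> M :: real
  assumes V_grad: "\<forall>x. (V has_derivative (\<lambda>h. gV x \<bullet> h)) (at x)"
    and V_C2: "\<forall>x. (gV has_derivative blinfun_apply (HV x)) (at x)" "continuous_on UNIV HV"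
    and pi_normalizable: "integrable lborel (\<lambda>x. exp (- V x))"
    and kernel: "\<forall>x y. k x y = \<Phi> x \<bullet> \<Phi> y"
    and D\<Phi>: "\<forall>x. \<forall>i\<in>Basis. ((\<lambda>t. \<Phi> (x + t *\<^sub>R i)) has_vector_derivative D\<Phi> x i) (at 0)"
    and A1: "\<exists>B>0. \<forall>x. norm (\<Phi> x) \<le> B \<and> sqrt (\<Sum>i\<in>Basis. (norm (D\<Phi> x i))\<^sup>2) \<le> B"
    and lip: "M-lipschitz_on UNIV (\<lambda>x. - gV x)"
    and gamma_pos: "\<gamma> > 0"
    and dens_meas: "\<forall>n. p n \<in> borel_measurable lborel"
    and dens_pos: "\<forall>n x. p n x > 0"
    and dens_prob: "\<forall>n. integrable lborel (p n) \<and> (\<integral>x. p n x \<partial>lborel) = 1"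
    and dens_grad: "\<forall>n x. (p n has_derivative (\<lambda>h. p' n x \<bullet> h)) (at x)"
    and dens_grad_cont: "\<forall>n. continuous_on UNIV (p' n)"
    and dens_grad_int: "\<forall>n. integrable lborel (\<lambda>x. norm (p' n x))"
    and P2: "integrable lborel (\<lambda>x. (norm x)\<^sup>2 * p 0 x)"
    and svgd: "\<forall>n. distr (density lborel (p n)) lborel
                   (svgd_map \<gamma> k (p n) (score (p n) (p' n) gV))
                 = density lborel (p (Suc n))"
    and moment: "\<exists>R. \<forall>n. (\<integral>\<^sup>+x. ennreal (norm x * p n x) \<partial>lborel) \<le> ennreal R"
  shows "\<exists>C>0. \<forall>n. I_Stein \<Phi> (p n) (score (p n) (p' n) gV) \<le> C"

proof -
  obtain B where B: "B > 0" and BB: "\<And>x. norm (\<Phi> x) \<le> B \<and> sqrt (\<Sum>i\<in>Basis. (norm (D\<Phi> x i))\<^sup>2) \<le> B"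
    using A1 by blast
  have D\<Phi>b: "norm (D\<Phi> y i) \<le> B" if i: "i \<in> Basis" for y i
  proof -
    have "(norm (D\<Phi> y i))\<^sup>2 \<le> (\<Sum>j\<in>Basis. (norm (D\<Phi> y j))\<^sup>2)"
      using i by (intro member_le_sum) auto
    then have "norm (D\<Phi> y i) \<le> sqrt (\<Sum>j\<in>Basis. (norm (D\<Phi> y j))\<^sup>2)"
      by (rule real_le_rsqrt)
    then show ?thesis using BB[of y] by linarith
  qed
  have \<Phi>dir: "norm (\<Phi> (x + t *\<^sub>R i) - \<Phi> x) \<le> B * \<bar>t\<bar>" if i: "i \<in> Basis" for x t i
  proof (rule dir_lip[of \<Phi> i "\<lambda>y. D\<Phi> y i" B])
    show "\<And>y. ((\<lambda>t. \<Phi> (y + t *\<^sub>R i)) has_vector_derivative D\<Phi> y i) (at 0)"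
      using D\<Phi> i by blast
    show "\<And>y. norm (D\<Phi> y i) \<le> B" using D\<Phi>b i by blast
  qed
  have "(B * DIM('a))-lipschitz_on UNIV \<Phi>"
    unfolding lipschitz_on_def
  proof (intro conjI ballI)
    show "0 \<le> B * real DIM('a)" using B by simp
    fix x y :: 'a
    show "dist (\<Phi> x) (\<Phi> y) \<le> B * real DIM('a) * dist x y"
    proof -
      have "norm (\<Phi> x - \<Phi> y) \<le> (B * DIM('a)) * norm (x - y)"
        by (rule full_lip) (use \<Phi>dir B in auto)
      then show ?thesis by (simp add: dist_norm)
    qed
  qed
  then have \<Phi>c: "continuous_on UNIV \<Phi>" by (rule lipschitz_on_continuous_on)
  have M0: "M \<ge> 0" using lip by (rule lipschitz_on_nonneg)
  have gVb: "norm (gV x) \<le> norm (gV 0) + M * norm x" for x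
  proof -
    have "dist (- gV x) (- gV 0) \<le> M * dist x 0" using lip by (rule lipschitz_onD) auto
    then have "norm (gV x - gV 0) \<le> M * norm x" by (simp add: dist_norm norm_minus_commute)
    then show ?thesis using norm_triangle_ineq2[of "gV x" "gV 0"] by linarith
  qed
  have gVc: "continuous_on UNIV gV"
    using V_C2(1) by (meson has_derivative_continuous continuous_at_imp_continuous_on)
  obtain R where R: "\<And>n. (\<integral>\<^sup>+x. ennreal (norm x * p n x) \<partial>lborel) \<le> ennreal R"
    using moment by blast
  define R' where "R' = max R 0"
  have momi: "integrable lborel (\<lambda>x. norm x * p n x)" and momb: "(\<integral>x. norm x * p n x \<partial>lborel) \<le> R'" for n
  proof -
    have [measurable]: "p n \<in> borel_measurable lborel" using dens_meas by blast
    have nn: "0 \<le> norm x * p n x" for x using dens_pos by (simp add: less_imp_le)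
    have le: "(\<integral>\<^sup>+x. ennreal (norm x * p n x) \<partial>lborel) \<le> ennreal R'"
      using R[of n] by (rule order_trans) (simp add: R'_def ennreal_leI)
    show "integrable lborel (\<lambda>x. norm x * p n x)"
    proof (rule integrableI_bounded)
      show "(\<integral>\<^sup>+x. ennreal (norm (norm x * p n x)) \<partial>lborel) < \<infinity>"
        using le nn by (simp add: abs_of_nonneg) (meson ennreal_less_top le_less_trans)
    qed measurable
    have "(\<integral>x. norm x * p n x \<partial>lborel) = enn2real (\<integral>\<^sup>+x. ennreal (norm x * p n x) \<partial>lborel)"
      by (rule integral_eq_nn_integral) (auto simp: nn)
    also have "\<dots> \<le> enn2real (ennreal R')"
      using le by (rule enn2real_mono) simp
    also have "\<dots> = R'" by (simp add: R'_def)
    finally show "(\<integral>x. norm x * p n x \<partial>lborel) \<le> R'" .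
  qed
  define K where "K = B * (1 + norm (gV 0) + M * R')"
  have vb: "norm (\<integral>x. (p n x * (score (p n) (p' n) gV x \<bullet> i)) *\<^sub>R \<Phi> x \<partial>lborel) \<le> K"
    if i: "i \<in> Basis" for n i
    unfolding K_def
  proof (rule vec_bound)
    show "\<And>x. (p n has_derivative (\<lambda>h. p' n x \<bullet> h)) (at x)" using dens_grad by blast
    show "continuous_on UNIV (p' n)" using dens_grad_cont by blast
    show "integrable lborel (\<lambda>x. norm (p' n x))" using dens_grad_int by blast
    show "integrable lborel (p n)" "(\<integral>x. p n x \<partial>lborel) = 1" using dens_prob by auto
    show "\<And>x. p n x > 0" using dens_pos by blast
    show "integrable lborel (\<lambda>x. norm x * p n x)" by (rule momi)
    show "(\<integral>x. norm x * p n x \<partial>lborel) \<le> R'" by (rule momb)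
    show "continuous_on UNIV gV" by (rule gVc)
    show "\<And>x. norm (gV x) \<le> norm (gV 0) + M * norm x" by (rule gVb)
    show "M \<ge> 0" by (rule M0)
    show "continuous_on UNIV \<Phi>" by (rule \<Phi>c)
    show "\<And>x. norm (\<Phi> x) \<le> B" using BB by blast
    show "\<And>x t. norm (\<Phi> (x + t *\<^sub>R i) - \<Phi> x) \<le> B * \<bar>t\<bar>" using \<Phi>dir i by blast
    show "B \<ge> 0" using B by simp
    show "norm i = 1" using i by simp
  qed
  have K0: "K \<ge> 0"
  proof -
    obtain i0 :: 'a where i0: "i0 \<in> Basis" using nonempty_Basis by blast
    show ?thesis using vb[OF i0, of 0] norm_ge_zero by (rule order_trans[rotated])
  qed
  show ?thesis
  proof (intro exI[of _ "DIM('a) * K\<^sup>2 + 1"] conjI allI)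
    show "0 < real DIM('a) * K\<^sup>2 + 1" by (simp add: add_nonneg_pos)
    fix n
    have "I_Stein \<Phi> (p n) (score (p n) (p' n) gV) \<le> (\<Sum>i\<in>(Basis::'a set). K\<^sup>2)"
      unfolding I_Stein_def by (intro sum_mono power_mono vb) auto
    also have "\<dots> \<le> DIM('a) * K\<^sup>2 + 1" by simp
    finally show "I_Stein \<Phi> (p n) (score (p n) (p' n) gV) \<le> DIM('a) * K\<^sup>2 + 1" .
  qed
qed

end
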